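(* For any $v_{t-1},v_t,m_{t-1},m_t\in[0,1]$, \[ |m_t-m_{t-1}|\le 2\sup_{b\in[0,1]}\left|r(b;v_t,m_t)-r(b;v_{t-1},m_{t-1})\right|, \] where $r(b;v,m)\coloneqq (v-b)\cdot\mathbbm{1}(b\ge m)$.
   Context: $\mathbbm{1}(\cdot)$ denotes the indicator function. $r(b;v,m)$ is the reward in a first-price auction of a bidder with value $v$ who bids $b$ when the highest competing bid is $m$. *)

theory Defs
  imports "HOL-Analysis.Analysis"
begin

text \<open>Reward in a first-price auction: bidder with value v bids b, highest competing bid m.\<close>
definition reward :: "real \<Rightarrow> real \<Rightarrow> real \<Rightarrow> real" where
  "reward b v m = (v - b) * (if b \<ge> m then 1 else 0)"

end

theory Submission
  imports Defs
begin

lemma bdd_aux: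
  fixes v0 v1 m0 m1 :: real
  assumes "v0 \<in> {0..1}" and "v1 \<in> {0..1}"
  shows "bdd_above ((\<lambda>b. \<bar>reward b v1 m1 - reward b v0 m0\<bar>) ` {0..1})"
  using assms by (intro bdd_aboveI2[where M=2]) (auto simp: reward_def)

lemma main_aux:
  fixes v0 v1 m0 m1 :: real
  assumes "v0 \<in> {0..1}" and "v1 \<in> {0..1}" and "m0 \<in> {0..1}" and "m1 \<in> {0..1}"
    and "m0 < m1"
  shows "m1 - m0 \<le> 2 * (SUP b\<in>{0..1}. \<bar>reward b v1 m1 - reward b v0 m0\<bar>)"
proof (rule ccontr)
  define S where "S = (SUP b\<in>{0..1}. \<bar>reward b v1 m1 - reward b v0 m0\<bar>)"
  assume "\<not> ?thesis"
  hence lt: "2 * S < m1 - m0" by (simp add: S_def)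
  have up: "\<bar>reward b v1 m1 - reward b v0 m0\<bar> \<le> S" if "b \<in> {0..1}" for b
    unfolding S_def by (rule cSUP_upper[OF that bdd_aux[OF assms(1,2)]])
  have "\<bar>reward m0 v1 m1 - reward m0 v0 m0\<bar> \<le> S" using up assms by auto
  hence h1: "\<bar>v0 - m0\<bar> \<le> S" using assms by (simp add: reward_def)
  define b where "b = (m1 + v0 + S) / 2"
  have bm0: "m0 \<le> b" "b < m1" using h1 lt by (auto simp: b_def)
  hence "b \<in> {0..1}" using assms by auto
  hence "\<bar>reward b v1 m1 - reward b v0 m0\<bar> \<le> S" by (rule up)
  hence "\<bar>v0 - b\<bar> \<le> S" using bm0 by (simp add: reward_def)
  thus False using h1 lt by (auto simp: b_def abs_le_iff field_simps)
qed

theorem proposition1: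
  fixes v0 v1 m0 m1 :: real
  assumes "v0 \<in> {0..1}" and "v1 \<in> {0..1}" and "m0 \<in> {0..1}" and "m1 \<in> {0..1}"
  shows "\<bar>m1 - m0\<bar> \<le> 2 * (SUP b\<in>{0..1}. \<bar>reward b v1 m1 - reward b v0 m0\<bar>)"
proof (cases "m0 < m1")
  case True
  thus ?thesis using main_aux[OF assms True] by simp
next
  case False
  show ?thesis
  proof (cases "m1 < m0")
    case True
    have "m0 - m1 \<le> 2 * (SUP b\<in>{0..1}. \<bar>reward b v0 m0 - reward b v1 m1\<bar>)"
      using main_aux[OF assms(2,1,4,3) True] .
    thus ?thesis using True by (simp add: abs_minus_commute)
  next
    case False
    hence "m1 = m0" using \<open>\<not> m0 < m1\<close> by simp
    have "0 \<le> \<bar>reward 0 v1 m1 - reward 0 v0 m0\<bar>" by simp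
    also have "\<dots> \<le> (SUP b\<in>{0..1}. \<bar>reward b v1 m1 - reward b v0 m0\<bar>)"
      by (rule cSUP_upper[OF _ bdd_aux[OF assms(1,2)]]) auto
    finally show ?thesis using \<open>m1 = m0\<close> by simp
  qed
qed

end
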